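(* Let $d\ge4$ and $1\le p<d/2$ be integers. Every critical point of $\varphi_0$ in the interior of $K_0$ lies on the curve $\tilde{\mathbf{z}}:(0,\infty)\to K_0$, $x\mapsto(\tilde z_{j01}(x),\tilde z_{j10}(x))_{j\in[p]}$, where $$\tilde z_{j01}(x)=\tilde z_{j10}(x)=\frac{\tau_jx^j}{2\theta(x)}.$$ Moreover, for $x>0$, the point $\tilde{\mathbf{z}}(x)$ is a critical point of $\varphi_0$ if and only if $x$ is a root of the polynomial $$g(x)=2\bigl(p\theta(x)-\theta_1(x)\bigr)(1+x)-d\,\theta(x).$$
   Context: Let $\tau_j=\binom{d}{p}\binom{p}{j}\binom{d-p}{p-j}$ for $0\le j\le p$, $\theta(t)=\sum_{j=0}^p\tau_jt^j$ and $\theta_1(t)=\sum_{j=1}^pj\tau_jt^j$. Let $K_0\subset\mathbb{R}^{2p}$ be the set of points $(z_{j01},z_{j10})_{j\in[p]}$ with all $z_{j01},z_{j10}\ge0$ and $\sum_{j\in[p]}z_{j01}\le\frac12$, $\sum_{j\in[p]}z_{j10}\le\frac12$; set $z_{001}=\frac12-\sum_{j\in[p]}z_{j01}$ and $z_{010}=\frac12-\sum_{j\in[p]}z_{j10}$. Define $A_0=p-\sum_{j\in[p]}j(z_{j01}+z_{j10})$, $B_0=\frac d2-A_0$, and $$\varphi_0=A_0\log A_0+B_0\log B_0+\sum_{j=0}^p\sum_{(\alpha,\beta)\in\{(0,1),(1,0)\}}\bigl(z_{j\alpha\beta}\log\tau_j-z_{j\alpha\beta}\log z_{j\alpha\beta}\bigr).$$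 (This is the restriction of the function $\varphi$ to the face $z=0$, where all $z_{j00}=z_{j11}=0$.) A critical point is a point of the interior of $K_0$ where the gradient of $\varphi_0$ vanishes. *)

theory Defs
  imports "HOL-Analysis.Analysis"
begin

text \<open>Points of K_0 subset R^{2p} are pairs (u, v) of functions nat => real, where
  u j = z_{j01} and v j = z_{j10} for j in [p] = {1..p}; values outside {1..p} are irrelevant.\<close>

definition tau :: "nat \<Rightarrow> nat \<Rightarrow> nat \<Rightarrow> real" where
  "tau d p j = real ((d choose p) * (p choose j) * ((d - p) choose (p - j)))"

definition theta :: "nat \<Rightarrow> nat \<Rightarrow> real \<Rightarrow> real" where
  "theta d p t = (\<Sum>j = 0..p. tau d p j * t ^ j)"

definition theta1 :: "nat \<Rightarrow> nat \<Rightarrow> real \<Rightarrow> real" where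
  "theta1 d p t = (\<Sum>j = 1..p. real j * tau d p j * t ^ j)"

definition phi0 :: "nat \<Rightarrow> nat \<Rightarrow> (nat \<Rightarrow> real) \<Rightarrow> (nat \<Rightarrow> real) \<Rightarrow> real" where
  "phi0 d p u v =
    (let z01 = (\<lambda>j. if j = 0 then 1/2 - (\<Sum>i = 1..p. u i) else u j);
         z10 = (\<lambda>j. if j = 0 then 1/2 - (\<Sum>i = 1..p. v i) else v j);
         A = real p - (\<Sum>j = 1..p. real j * (u j + v j));
         B = real d / 2 - A
     in A * ln A + B * ln B
        + (\<Sum>j = 0..p. (z01 j * ln (tau d p j) - z01 j * ln (z01 j))
                      + (z10 j * ln (tau d p j) - z10 j * ln (z10 j))))"

definition interior_K0 :: "nat \<Rightarrow> (nat \<Rightarrow> real) \<Rightarrow> (nat \<Rightarrow> real) \<Rightarrow> bool" where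
  "interior_K0 p u v \<longleftrightarrow>
     (\<forall>j\<in>{1..p}. u j > 0 \<and> v j > 0) \<and> (\<Sum>j = 1..p. u j) < 1/2 \<and> (\<Sum>j = 1..p. v j) < 1/2"

definition critical0 :: "nat \<Rightarrow> nat \<Rightarrow> (nat \<Rightarrow> real) \<Rightarrow> (nat \<Rightarrow> real) \<Rightarrow> bool" where
  "critical0 d p u v \<longleftrightarrow> interior_K0 p u v \<and>
     (\<forall>j\<in>{1..p}.
        ((\<lambda>t. phi0 d p (u(j := t)) v) has_real_derivative 0) (at (u j)) \<and>
        ((\<lambda>t. phi0 d p u (v(j := t))) has_real_derivative 0) (at (v j)))"

definition ztilde :: "nat \<Rightarrow> nat \<Rightarrow> real \<Rightarrow> nat \<Rightarrow> real" where
  "ztilde d p x j = tau d p j * x ^ j / (2 * theta d p x)"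

definition gpoly :: "nat \<Rightarrow> nat \<Rightarrow> real \<Rightarrow> real" where
  "gpoly d p x = 2 * (real p * theta d p x - theta1 d p x) * (1 + x) - real d * theta d p x"

end

theory Submission
  imports Defs
begin

lemma phi0_sym: "phi0 d p u v = phi0 d p v u"
  unfolding phi0_def Let_def by (simp add: add_ac sum.distrib[symmetric])

lemma int_sym: "interior_K0 p u v = interior_K0 p v u"
  unfolding interior_K0_def by auto

lemma tau_pos: assumes "2*p < d" "j \<le> p" shows "tau d p j > 0"
  unfolding tau_def using assms by simp

lemma A_bounds:
  assumes "interior_K0 p u v" "1 \<le> p"
  shows "real p - (\<Sum>i=1..p. real i * (u i + v i)) > 0"
        "real p - (\<Sum>i=1..p. real i * (u i + v i)) < real p"
proof -
  have pos: "\<And>i. i \<in> {1..p} \<Longrightarrow> u i > 0 \<and> v i > 0" using assms unfolding interior_K0_def by auto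
  have nn: "\<And>i. i \<in> {1..p} \<Longrightarrow> 0 \<le> u i + v i" using pos by (simp add: add_nonneg_nonneg less_imp_le)
  have "(\<Sum>i=1..p. real i * (u i + v i)) \<le> (\<Sum>i=1..p. real p * (u i + v i))"
    apply (rule sum_mono, rule mult_right_mono) using nn by auto
  also have "\<dots> = real p * ((\<Sum>i=1..p. u i) + (\<Sum>i=1..p. v i))"
    by (simp add: distrib_left sum.distrib sum_distrib_left)
  also have "\<dots> < real p * 1"
    using assms unfolding interior_K0_def by (intro mult_strict_left_mono) auto
  finally show "real p - (\<Sum>i=1..p. real i * (u i + v i)) > 0" by simp
  have "(\<Sum>i=1..p. real i * (u i + v i)) > 0"
  proof (rule sum_pos)
    fix i assume i: "i \<in> {1..p}"
    then have "u i > 0" "v i > 0" "i > 0" using pos by auto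
    then show "0 < real i * (u i + v i)" by simp
  qed (use assms in auto)
  then show "real p - (\<Sum>i=1..p. real i * (u i + v i)) < real p" by simp
qed

lemma deriv_u:
  assumes int: "interior_K0 p u v" and j: "j \<in> {1..p}" and dp: "2*p < d"
  defines "A \<equiv> real p - (\<Sum>i=1..p. real i * (u i + v i))"
  defines "Z \<equiv> 1/2 - (\<Sum>i=1..p. u i)"
  shows "((\<lambda>t. phi0 d p (u(j:=t)) v) has_real_derivative
     (real j * (ln (real d/2 - A) - ln A) + ln (tau d p j) - ln (u j) - ln (tau d p 0) + ln Z)) (at (u j))"
proof -
  have p1: "1 \<le> p" using j by auto
  have Apos: "A > 0" and Alt: "A < real p" using A_bounds[OF int p1] unfolding A_def by auto
  have Bpos: "real d/2 - A > 0" using Alt dp by linarith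
  have Zpos: "Z > 0" using int unfolding Z_def interior_K0_def by auto
  have ujpos: "u j > 0" using int j unfolding interior_K0_def by auto
  define z01 where "z01 = (\<lambda>j. if j = 0 then 1/2 - (\<Sum>i = 1..p. u i) else u j)"
  define z10 where "z10 = (\<lambda>j. if j = 0 then 1/2 - (\<Sum>i = 1..p. v i) else v j)"
  define G where "G = (\<lambda>i. (z01 i * ln (tau d p i) - z01 i * ln (z01 i))
                      + (z10 i * ln (tau d p i) - z10 i * ln (z10 i)))"
  define R where "R = (\<Sum>i\<in>{0..p}-{j}-{0}. G i)"
  define F where "F = (\<lambda>t. (A + real j * u j - real j * t) * ln (A + real j * u j - real j * t)
     + (real d / 2 - (A + real j * u j - real j * t)) * ln (real d / 2 - (A + real j * u j - real j * t))
     + (((Z + u j - t) * ln (tau d p 0) - (Z + u j - t) * ln (Z + u j - t)) + (z10 0 * ln (tau d p 0) - z10 0 * ln (z10 0)))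
     + ((t * ln (tau d p j) - t * ln t) + (v j * ln (tau d p j) - v j * ln (v j)))
     + R)"
  have jn0: "j \<noteq> 0" using j by auto
  have eq: "phi0 d p (u(j:=t)) v = F t" for t
  proof -
    have s1: "(\<Sum>i=1..p. (u(j:=t)) i) = (\<Sum>i=1..p. u i) - u j + t"
      using sum.remove[of "{1..p}" j u] sum.remove[of "{1..p}" j "u(j:=t)"] j
      by (simp add: sum.cong[OF refl, of "{1..p}-{j}" "u(j:=t)" u])
    have s2: "(\<Sum>i=1..p. real i * ((u(j:=t)) i + v i)) = (\<Sum>i=1..p. real i * (u i + v i)) - real j * u j + real j * t"
    proof -
      have "(\<Sum>i=1..p. real i * ((u(j:=t)) i + v i)) = real j * ((u(j:=t)) j + v j) + (\<Sum>i\<in>{1..p}-{j}. real i * ((u(j:=t)) i + v i))"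
        by (rule sum.remove) (use j in auto)
      also have "(\<Sum>i\<in>{1..p}-{j}. real i * ((u(j:=t)) i + v i)) = (\<Sum>i\<in>{1..p}-{j}. real i * (u i + v i))"
        by (rule sum.cong) auto
      also have "(\<Sum>i=1..p. real i * (u i + v i)) = real j * (u j + v j) + (\<Sum>i\<in>{1..p}-{j}. real i * (u i + v i))"
        by (rule sum.remove) (use j in auto)
      ultimately show ?thesis by (simp add: algebra_simps)
    qed
    define z01' where "z01' = (\<lambda>i. if i = 0 then 1/2 - (\<Sum>i = 1..p. (u(j:=t)) i) else (u(j:=t)) i)"
    define G' where "G' = (\<lambda>i. (z01' i * ln (tau d p i) - z01' i * ln (z01' i))
                      + (z10 i * ln (tau d p i) - z10 i * ln (z10 i)))"
    have s3: "(\<Sum>i=0..p. G' i) = G' 0 + G' j + R"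
    proof -
      have "(\<Sum>i=0..p. G' i) = G' j + (\<Sum>i\<in>{0..p}-{j}. G' i)"
        by (rule sum.remove) (use j in auto)
      also have "(\<Sum>i\<in>{0..p}-{j}. G' i) = G' 0 + (\<Sum>i\<in>{0..p}-{j}-{0}. G' i)"
        by (rule sum.remove) (use jn0 in auto)
      also have "(\<Sum>i\<in>{0..p}-{j}-{0}. G' i) = R"
        unfolding R_def by (rule sum.cong) (auto simp: G'_def G_def z01'_def z01_def)
      finally show ?thesis by simp
    qed
    have "phi0 d p (u(j:=t)) v = (real p - (\<Sum>i=1..p. real i * ((u(j:=t)) i + v i))) * ln (real p - (\<Sum>i=1..p. real i * ((u(j:=t)) i + v i)))
       + (real d/2 - (real p - (\<Sum>i=1..p. real i * ((u(j:=t)) i + v i)))) * ln (real d/2 - (real p - (\<Sum>i=1..p. real i * ((u(j:=t)) i + v i))))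
       + (\<Sum>i=0..p. G' i)"
      unfolding phi0_def Let_def G'_def z01'_def z10_def by simp
    also have "\<dots> = F t"
      unfolding s3 s2 F_def
      unfolding G'_def z01'_def s1 fun_upd_same
      by (simp del: fun_upd_apply add: z10_def jn0 A_def Z_def algebra_simps)
    finally show ?thesis .
  qed
  have "(F has_real_derivative
     (real j * (ln (real d/2 - A) - ln A) + ln (tau d p j) - ln (u j) - ln (tau d p 0) + ln Z)) (at (u j))"
    unfolding F_def
    using Apos Bpos Zpos ujpos
    apply (auto intro!: derivative_eq_intros)
    by (simp add: right_diff_distrib)
  then show ?thesis using eq by simp
qed

lemma deriv_v:
  assumes int: "interior_K0 p u v" and j: "j \<in> {1..p}" and dp: "2*p < d"
  defines "A \<equiv> real p - (\<Sum>i=1..p. real i * (u i + v i))"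
  defines "Z \<equiv> 1/2 - (\<Sum>i=1..p. v i)"
  shows "((\<lambda>t. phi0 d p u (v(j:=t))) has_real_derivative
     (real j * (ln (real d/2 - A) - ln A) + ln (tau d p j) - ln (v j) - ln (tau d p 0) + ln Z)) (at (v j))"
proof -
  have "(\<Sum>i=1..p. real i * (v i + u i)) = (\<Sum>i=1..p. real i * (u i + v i))"
    by (simp add: add.commute)
  moreover have "(\<lambda>t. phi0 d p u (v(j:=t))) = (\<lambda>t. phi0 d p (v(j:=t)) u)"
    using phi0_sym by metis
  ultimately show ?thesis
    using deriv_u[of p v u j d] int j dp int_sym unfolding A_def Z_def by metis
qed

lemma theta_split: "theta d p x = tau d p 0 + (\<Sum>j=1..p. tau d p j * x^j)"
  unfolding theta_def by (simp add: sum.atLeast_Suc_atMost)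

lemma theta_pos: assumes "2*p < d" "x > 0" shows "theta d p x > 0"
proof -
  have "(\<Sum>j=1..p. tau d p j * x^j) \<ge> 0"
    using assms tau_pos by (intro sum_nonneg) (auto intro!: mult_nonneg_nonneg less_imp_le)
  then show ?thesis using theta_split tau_pos[OF assms(1), of 0] by (metis add_pos_nonneg le0)
qed

lemma solve_curve:
  assumes dp: "2*p < d" and x: "x > 0"
    and w: "\<forall>j\<in>{1..p}. w j = tau d p j * x^j * Z / tau d p 0"
    and Z: "Z = 1/2 - (\<Sum>i=1..p. w i)"
  shows "\<forall>j\<in>{1..p}. w j = ztilde d p x j"
proof -
  have t0: "tau d p 0 > 0" using tau_pos[OF dp] by simp
  have th: "theta d p x > 0" using theta_pos[OF dp x] .
  have "(\<Sum>i=1..p. w i) = (\<Sum>i=1..p. tau d p i * x^i) * Z / tau d p 0"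
    using w by (simp add: sum_divide_distrib sum_distrib_right)
  also have "\<dots> = (theta d p x - tau d p 0) * Z / tau d p 0" using theta_split by simp
  finally have "Z = 1/2 - (theta d p x - tau d p 0) * Z / tau d p 0" using Z by simp
  then have "Z * theta d p x = tau d p 0 / 2" using t0 by (simp add: field_simps)
  then have Zv: "Z = tau d p 0 / (2 * theta d p x)" using th by (simp add: field_simps)
  show ?thesis unfolding ztilde_def using w Zv t0 by simp
qed

lemma curve_facts:
  assumes dp: "2*p < d" and x: "x > 0" and p1: "1 \<le> p"
  shows "interior_K0 p (ztilde d p x) (ztilde d p x)"
    and "1/2 - (\<Sum>i=1..p. ztilde d p x i) = tau d p 0 / (2 * theta d p x)"
    and "real p - (\<Sum>i=1..p. real i * (ztilde d p x i + ztilde d p x i)) = real p - theta1 d p x / theta d p x"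
    and "\<And>j. j \<in> {1..p} \<Longrightarrow> ln (tau d p j) - ln (ztilde d p x j) - ln (tau d p 0) + ln (tau d p 0 / (2 * theta d p x)) = - (real j * ln x)"
proof -
  have t0: "tau d p 0 > 0" using tau_pos[OF dp] by simp
  have th: "theta d p x > 0" using theta_pos[OF dp x] .
  have zpos: "ztilde d p x j > 0" if "j \<in> {1..p}" for j
    using tau_pos[OF dp, of j] that th x unfolding ztilde_def by auto
  have S: "(\<Sum>i=1..p. ztilde d p x i) = (theta d p x - tau d p 0) / (2 * theta d p x)"
    unfolding ztilde_def by (simp add: sum_divide_distrib[symmetric] theta_split)
  show "1/2 - (\<Sum>i=1..p. ztilde d p x i) = tau d p 0 / (2 * theta d p x)"
    unfolding S using th by (simp add: field_simps)
  have "(\<Sum>i=1..p. ztilde d p x i) < 1/2" unfolding S using th t0 by (simp add: field_simps)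
  then show "interior_K0 p (ztilde d p x) (ztilde d p x)"
    unfolding interior_K0_def using zpos by auto
  have "(\<Sum>i=1..p. real i * (ztilde d p x i + ztilde d p x i)) = (\<Sum>i=1..p. real i * tau d p i * x^i) / theta d p x"
    unfolding ztilde_def sum_divide_distrib using th by (intro sum.cong) (auto simp: field_simps)
  then show "real p - (\<Sum>i=1..p. real i * (ztilde d p x i + ztilde d p x i)) = real p - theta1 d p x / theta d p x"
    unfolding theta1_def by simp
  fix j assume j: "j \<in> {1..p}"
  have tj: "tau d p j > 0" using tau_pos[OF dp, of j] j by auto
  have "ln (ztilde d p x j) = ln (tau d p j) + real j * ln x - ln (2 * theta d p x)"
    unfolding ztilde_def using tj x th by (simp add: ln_div ln_mult ln_realpow)
  moreover have "ln (tau d p 0 / (2 * theta d p x)) = ln (tau d p 0) - ln (2 * theta d p x)"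
    using t0 th by (simp add: ln_div)
  ultimately show "ln (tau d p j) - ln (ztilde d p x j) - ln (tau d p 0) + ln (tau d p 0 / (2 * theta d p x)) = - (real j * ln x)"
    by simp
qed

lemma solve_ln:
  assumes "0 = real j * (ln B - ln A) + ln t - ln w - ln t0 + ln Z"
    and "w > 0" "A > 0" "B > 0" "t > 0" "t0 > 0" "Z > 0"
  shows "w = t * (B/A)^j * Z / t0"
proof -
  have "ln w = real j * ln (B/A) + ln t - ln t0 + ln Z" using assms by (simp add: ln_div)
  then have "exp (ln w) = exp (real j * ln (B/A)) * exp (ln t) / exp (ln t0) * exp (ln Z)"
    by (simp add: exp_add exp_diff)
  also have "exp (real j * ln (B/A)) = (B/A)^j" using assms by (simp add: exp_of_nat_mult)
  finally show ?thesis using assms by simp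
qed

theorem lemmaA5:
  fixes d p :: nat
  assumes "d \<ge> 4" and "1 \<le> p" and "2 * p < d"
  shows "(\<forall>u v. critical0 d p u v \<longrightarrow>
            (\<exists>x>0. \<forall>j\<in>{1..p}. u j = ztilde d p x j \<and> v j = ztilde d p x j))
       \<and> (\<forall>x>0. critical0 d p (ztilde d p x) (ztilde d p x) \<longleftrightarrow> gpoly d p x = 0)"
proof (intro conjI allI impI)
  have dp: "2*p < d" and p1: "1 \<le> p" using assms by auto
  have t0: "tau d p 0 > 0" using tau_pos[OF dp] by simp
  fix u v assume c: "critical0 d p u v"
  have int: "interior_K0 p u v" using c unfolding critical0_def by auto
  define A where "A = real p - (\<Sum>i=1..p. real i * (u i + v i))"
  define Zu where "Zu = 1/2 - (\<Sum>i=1..p. u i)"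
  define Zv where "Zv = 1/2 - (\<Sum>i=1..p. v i)"
  have Apos: "A > 0" and Alt: "A < real p" using A_bounds[OF int p1] unfolding A_def by auto
  have Bpos: "real d/2 - A > 0" using Alt dp by linarith
  have Zu: "Zu > 0" "Zv > 0" using int unfolding Zu_def Zv_def interior_K0_def by auto
  define x where "x = (real d/2 - A) / A"
  have x: "x > 0" unfolding x_def using Apos Bpos by simp
  have hu: "\<forall>j\<in>{1..p}. u j = tau d p j * x^j * Zu / tau d p 0"
  proof
    fix j assume j: "j \<in> {1..p}"
    have "0 = real j * (ln (real d/2 - A) - ln A) + ln (tau d p j) - ln (u j) - ln (tau d p 0) + ln Zu"
      using DERIV_unique[OF deriv_u[OF int j dp] ] c j unfolding critical0_def A_def Zu_def by auto
    then show "u j = tau d p j * x^j * Zu / tau d p 0" unfolding x_def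
      by (rule solve_ln) (use int j Apos Bpos Zu t0 tau_pos[OF dp, of j] in \<open>auto simp: interior_K0_def\<close>)
  qed
  have hv: "\<forall>j\<in>{1..p}. v j = tau d p j * x^j * Zv / tau d p 0"
  proof
    fix j assume j: "j \<in> {1..p}"
    have "0 = real j * (ln (real d/2 - A) - ln A) + ln (tau d p j) - ln (v j) - ln (tau d p 0) + ln Zv"
      using DERIV_unique[OF deriv_v[OF int j dp] ] c j unfolding critical0_def A_def Zv_def by auto
    then show "v j = tau d p j * x^j * Zv / tau d p 0" unfolding x_def
      by (rule solve_ln) (use int j Apos Bpos Zu t0 tau_pos[OF dp, of j] in \<open>auto simp: interior_K0_def\<close>)
  qed
  show "\<exists>x>0. \<forall>j\<in>{1..p}. u j = ztilde d p x j \<and> v j = ztilde d p x j"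
    using solve_curve[OF dp x hu Zu_def] solve_curve[OF dp x hv Zv_def] x by auto
next
  have dp: "2*p < d" and p1: "1 \<le> p" using assms by auto
  fix x :: real assume x: "x > 0"
  note cf = curve_facts[OF dp x p1]
  define z where "z = ztilde d p x"
  define A where "A = real p - theta1 d p x / theta d p x"
  have th: "theta d p x > 0" using theta_pos[OF dp x] .
  have Apos: "A > 0" and Alt: "A < real p" using A_bounds[OF cf(1) p1] unfolding A_def cf(3) by auto
  have Bpos: "real d/2 - A > 0" using Alt dp by linarith
  have D: "((\<lambda>t. phi0 d p (z(j:=t)) z) has_real_derivative
           (real j * (ln (real d/2 - A) - ln A - ln x))) (at (z j))"
      "((\<lambda>t. phi0 d p z (z(j:=t))) has_real_derivative
           (real j * (ln (real d/2 - A) - ln A - ln x))) (at (z j))"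
    if j: "j \<in> {1..p}" for j
  proof -
    have c2: "1/2 - (\<Sum>i=1..p. z i) = tau d p 0 / (2 * theta d p x)" using cf(2) unfolding z_def .
    have c3: "real p - (\<Sum>i=1..p. real i * (z i + z i)) = A" using cf(3) unfolding z_def A_def .
    have e: "real j * (ln (real d/2 - A) - ln A) + ln (tau d p j) - ln (z j) - ln (tau d p 0) + ln (tau d p 0 / (2 * theta d p x))
        = real j * (ln (real d/2 - A) - ln A - ln x)"
      using cf(4)[OF j] unfolding z_def by (simp add: right_diff_distrib)
    show "((\<lambda>t. phi0 d p (z(j:=t)) z) has_real_derivative
           (real j * (ln (real d/2 - A) - ln A - ln x))) (at (z j))"
      using deriv_u[OF cf(1) j dp] unfolding z_def[symmetric] unfolding c2 c3 e .
    show "((\<lambda>t. phi0 d p z (z(j:=t))) has_real_derivative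
           (real j * (ln (real d/2 - A) - ln A - ln x))) (at (z j))"
      using deriv_v[OF cf(1) j dp] unfolding z_def[symmetric] unfolding c2 c3 e .
  qed
  have "critical0 d p z z \<longleftrightarrow> (\<forall>j\<in>{1..p}. real j * (ln (real d/2 - A) - ln A - ln x) = 0)"
  proof
    assume c: "critical0 d p z z"
    show "\<forall>j\<in>{1..p}. real j * (ln (real d/2 - A) - ln A - ln x) = 0"
      using c D DERIV_unique unfolding critical0_def by blast
  next
    assume h: "\<forall>j\<in>{1..p}. real j * (ln (real d/2 - A) - ln A - ln x) = 0"
    show "critical0 d p z z" unfolding critical0_def
      using cf(1) D h unfolding z_def by metis
  qed
  also have "\<dots> \<longleftrightarrow> ln (real d/2 - A) = ln A + ln x"
  proof
    assume "\<forall>j\<in>{1..p}. real j * (ln (real d/2 - A) - ln A - ln x) = 0"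
    then have "real 1 * (ln (real d/2 - A) - ln A - ln x) = 0" using p1 by auto
    then show "ln (real d/2 - A) = ln A + ln x" by simp
  qed simp
  also have "\<dots> \<longleftrightarrow> real d/2 - A = A * x"
  proof -
    have "ln A + ln x = ln (A*x)" using Apos x by (simp add: ln_mult)
    then show ?thesis using Apos Bpos x by (simp add: ln_inj_iff)
  qed
  also have "\<dots> \<longleftrightarrow> gpoly d p x = 0"
  proof -
    have m: "(real d/2 - A = A * x) \<longleftrightarrow> (2*theta d p x) * (real d/2 - A) = (2*theta d p x) * (A*x)"
      using th by simp
    have a: "(2*theta d p x) * A = 2 * (real p * theta d p x - theta1 d p x)"
      unfolding A_def using th by (simp add: field_simps)
    have b1: "(2*theta d p x) * (real d/2 - A) = real d * theta d p x - 2 * (real p * theta d p x - theta1 d p x)"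
      using a by (simp add: algebra_simps)
    have b2: "(2*theta d p x) * (A*x) = 2 * (real p * theta d p x - theta1 d p x) * x"
      using a by (metis mult.assoc)
    show ?thesis unfolding m b1 b2 gpoly_def by (auto simp: algebra_simps)
  qed
  finally show "critical0 d p (ztilde d p x) (ztilde d p x) \<longleftrightarrow> gpoly d p x = 0" unfolding z_def .
qed

end
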